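(* Let $a<b$, let $\alpha\in C^1([a,b],\,]0,1[)$, fix $n\in\mathbb{N}$ and an integer $N\ge n+1$, and let $x\in C^{n+1}([a,b],\mathbb{R})$. For $t\in\,]a,b]$ and $k\ge n+1$ let $V_k(t)=(k-n)\int_a^t(\tau-a)^{k-n-1}x(\tau)\,d\tau$, and let $$A(\alpha(t),k)=\frac{1}{\Gamma(k+1-\alpha(t))}\Big[1+\sum_{p=n+1-k}^{N}\frac{\Gamma(p-n+\alpha(t))}{\Gamma(\alpha(t)-k)(p-n+k)!}\Big]\ (k=0,\dots,n),\qquad B(\alpha(t),k)=\frac{\Gamma(k-n+\alpha(t))}{\Gamma(-\alpha(t))\Gamma(1+\alpha(t))(k-n)!}\ (k\ge n+1),$$ $$S_1(t)=(t-a)^{-\alpha(t)}\Big[\sum_{k=0}^{n}A(\alpha(t),k)(t-a)^k x^{(k)}(t)+\sum_{k=n+1}^{N}B(\alpha(t),k)(t-a)^{n-k}V_k(t)\Big].$$ Then for every $t\in\,]a,b]$, $${}_a\mathbb{D}_t^{\alpha(t)}x(t)=S_1(t)+E_{1,N}(t),$$ where $$|E_{1,N}(t)|\le \max_{\tau\in[a,t]}|x^{(n+1)}(\tau)|\cdot\frac{\exp\big((n-\alpha(t))^2+n-\alpha(t)\big)}{\Gamma(n+1-\alpha(t))(n-\alpha(t))N^{n-\alpha(t)}}(t-a)^{n+1-\alpha(t)}.$$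
   Context: For $\alpha:[a,b]\to\,]0,1[$ and $t\in\,]a,b]$, the left Marchaud fractional derivative of variable order $\alpha(\cdot)$ is $${}_a\mathbb{D}_t^{\alpha(t)}x(t)=\frac{x(t)}{\Gamma(1-\alpha(t))(t-a)^{\alpha(t)}}+\frac{\alpha(t)}{\Gamma(1-\alpha(t))}\int_a^t\frac{x(t)-x(\tau)}{(t-\tau)^{1+\alpha(t)}}\,d\tau.$$ *)

theory Defs
  imports "HOL-Analysis.Analysis"
begin

definition marchaud_left :: "real \<Rightarrow> (real \<Rightarrow> real) \<Rightarrow> (real \<Rightarrow> real) \<Rightarrow> real \<Rightarrow> real" where
  "marchaud_left a alpha x t =
     x t / (Gamma (1 - alpha t) * (t - a) powr alpha t)
     + alpha t / Gamma (1 - alpha t) *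
       integral {a..t} (\<lambda>\<tau>. (x t - x \<tau>) / (t - \<tau>) powr (1 + alpha t))"

definition V_mom :: "real \<Rightarrow> (real \<Rightarrow> real) \<Rightarrow> nat \<Rightarrow> nat \<Rightarrow> real \<Rightarrow> real" where
  "V_mom a x n k t = real (k - n) * integral {a..t} (\<lambda>\<tau>. (\<tau> - a) ^ (k - n - 1) * x \<tau>)"

definition A_coef :: "nat \<Rightarrow> nat \<Rightarrow> real \<Rightarrow> nat \<Rightarrow> real" where
  "A_coef n N al k = 1 / Gamma (real k + 1 - al) *
     (1 + (\<Sum>p\<in>{int n + 1 - int k .. int N}.
            Gamma (real_of_int (p - int n) + al) /
            (Gamma (al - real k) * fact (nat (p - int n + int k)))))"

definition B_coef :: "nat \<Rightarrow> real \<Rightarrow> nat \<Rightarrow> real" where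
  "B_coef n al k = Gamma (real k - real n + al) /
     (Gamma (- al) * Gamma (1 + al) * fact (k - n))"

text \<open>S_1(t); D k stands for the k-th derivative of x.\<close>
definition S1 :: "real \<Rightarrow> (real \<Rightarrow> real) \<Rightarrow> (nat \<Rightarrow> real \<Rightarrow> real) \<Rightarrow> nat \<Rightarrow> nat \<Rightarrow> real \<Rightarrow> real" where
  "S1 a alpha D n N t = (t - a) powr (- alpha t) *
     ((\<Sum>k=0..n. A_coef n N (alpha t) k * (t - a) ^ k * D k t)
      + (\<Sum>k=n+1..N. B_coef n (alpha t) k * (t - a) powr (real n - real k) * V_mom a (D 0) n k t))"

end

theory Submission
  imports Defs
begin


lemma beta_poly:
  fixes a t :: real
  assumes "a \<le> t"
  shows "((\<lambda>\<tau>. (\<tau>-a)^i*(t-\<tau>)^m) has_integral (t-a)^(i+m+1)*fact i*fact m/fact(i+m+1)) {a..t}"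
  using assms
proof (induction m arbitrary: i)
  case 0
  have "((\<lambda>\<tau>. (\<tau>-a)^i) has_integral ((t-a)^(i+1)/(i+1) - (a-a)^(i+1)/(i+1))) {a..t}"
    apply (rule fundamental_theorem_of_calculus[OF 0])
    apply (auto intro!: derivative_eq_intros simp: has_real_derivative_iff_has_vector_derivative[symmetric])
    apply (case_tac i) apply (auto simp: field_simps)
    done
  moreover have "fact i / fact (i+1) = (1/(i+1)::real)"
  proof -
    have "(fact (i+1)::real) = real (i+1) * fact i" by (simp del: of_nat_Suc)
    then show ?thesis by simp
  qed
  ultimately have "(t-a)^(i+0+1)*fact i*fact 0/fact(i+0+1) = (t-a)^(i+1)/real(i+1) - (a-a)^(i+1)/real(i+1)"
    by (simp add: mult.assoc)
  with \<open>((\<lambda>\<tau>. (\<tau>-a)^i) has_integral _) {a..t}\<close> show ?case by simp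
next
  case (Suc m)
  have h1: "((\<lambda>\<tau>. (t-a)*((\<tau>-a)^i*(t-\<tau>)^m)) has_integral (t-a)*((t-a)^(i+m+1)*fact i*fact m/fact(i+m+1))) {a..t}"
    by (rule has_integral_mult_right[OF Suc.IH[OF Suc.prems]])
  have h2: "((\<lambda>\<tau>. (\<tau>-a)^(Suc i)*(t-\<tau>)^m) has_integral (t-a)^(Suc i+m+1)*fact (Suc i)*fact m/fact(Suc i+m+1)) {a..t}"
    by (rule Suc.IH[OF Suc.prems])
  note h3 = has_integral_diff[OF h1 h2]
  have fe: "(\<lambda>\<tau>. (t-a)*((\<tau>-a)^i*(t-\<tau>)^m) - (\<tau>-a)^(Suc i)*(t-\<tau>)^m) = (\<lambda>\<tau>. (\<tau>-a)^i*(t-\<tau>)^Suc m)"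
    by (rule ext) (simp add: algebra_simps)
  have ve: "(t-a)*((t-a)^(i+m+1)*fact i*fact m/fact(i+m+1)) - (t-a)^(Suc i+m+1)*fact (Suc i)*fact m/fact(Suc i+m+1)
      = (t-a)^(i+Suc m+1)*fact i*fact (Suc m)/fact(i+Suc m+1)"
  proof -
    define F where "F = (fact (i+m+1) :: real)"
    define X where "X = (t-a)^(i+m+2)"
    have F: "F > 0" unfolding F_def by simp
    have e1: "(fact (Suc i + m + 1)::real) = (real i + real m + 2) * F" "(fact (i + Suc m + 1)::real) = (real i + real m + 2) * F"
      unfolding F_def by (simp_all add: algebra_simps)
    have e2: "(fact (Suc i)::real) = (real i + 1) * fact i" "(fact (Suc m)::real) = (real m + 1) * fact m"
      by simp_all
    have e3: "(t-a)*(t-a)^(i+m+1) = X" "(t-a)^(Suc i+m+1) = X" "(t-a)^(i+Suc m+1) = X"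
      unfolding X_def by (simp_all add: algebra_simps)
    have gen0: "\<And>K I. K > 0 \<Longrightarrow> X*fact i*fact m/F - X*((I+1)*fact i)*fact m/(K*F) = X*fact i*((K-I-1)*fact m)/(K*F)"
      using F by (simp add: field_simps)
    have gen: "\<And>K I M. K > 0 \<Longrightarrow> K = I + M + 2 \<Longrightarrow> X*fact i*fact m/F - X*((I+1)*fact i)*fact m/(K*F) = X*fact i*((M+1)*fact m)/(K*F)"
    proof -
      fix K I M :: real assume k: "K > 0" "K = I + M + 2"
      then have "K-I-1 = M+1" by simp
      with gen0[OF k(1), of I] show "X*fact i*fact m/F - X*((I+1)*fact i)*fact m/(K*F) = X*fact i*((M+1)*fact m)/(K*F)" by simp
    qed
    have "X*fact i*fact m/F - X*((real i+1)*fact i)*fact m/((real i + real m + 2)*F) = X*fact i*((real m+1)*fact m)/((real i + real m + 2)*F)"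
      by (rule gen) auto
    moreover have "(t-a)*((t-a)^(i+m+1)*fact i*fact m/fact(i+m+1)) = X*fact i*fact m/F"
      by (simp add: X_def F_def mult.assoc)
    moreover have "(t-a)^(Suc i+m+1)*fact (Suc i)*fact m/fact(Suc i+m+1) = X*((real i+1)*fact i)*fact m/((real i + real m + 2)*F)"
      unfolding e1 e2 by (simp add: X_def mult.assoc)
    moreover have "(t-a)^(i+Suc m+1)*fact i*fact (Suc m)/fact(i+Suc m+1) = X*fact i*((real m+1)*fact m)/((real i + real m + 2)*F)"
      unfolding e1 e2 by (simp add: X_def mult.assoc)
    ultimately show ?thesis by simp
  qed
  show ?case using h3 unfolding fe ve .
qed

lemma powr_integral:
  fixes a t r :: real
  assumes "a \<le> t" "r > -1"
  shows "((\<lambda>\<tau>. (t-\<tau>) powr r) has_integral (t-a) powr (r+1)/(r+1)) {a..t}"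
proof -
  define F where "F = (\<lambda>\<tau>::real. - ((t-\<tau>) powr (r+1)) / (r+1))"
  have "((\<lambda>\<tau>. (t-\<tau>) powr r) has_integral (F t - F a)) {a..t}"
  proof (rule fundamental_theorem_of_calculus_interior[OF assms(1)])
    show "continuous_on {a..t} F"
      unfolding F_def using assms by (intro continuous_intros continuous_on_powr') auto
    fix x assume "x \<in> {a<..<t}"
    then have "(F has_real_derivative (t - x) powr r) (at x)"
      unfolding F_def using assms
      by - (rule derivative_eq_intros refl | simp)+
    then show "(F has_vector_derivative (t - x) powr r) (at x)"
      by (simp add: has_real_derivative_iff_has_vector_derivative)
  qed
  then show ?thesis by (simp add: F_def)
qed



lemma hockey:
  fixes g :: real
  shows "(\<Sum>q\<le>m. pochhammer g q / fact q) = pochhammer (g+1) m / fact m"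
proof (induction m)
  case 0 then show ?case by simp
next
  case (Suc m)
  have "pochhammer (g+1) m / fact m + pochhammer g (Suc m) / fact (Suc m)
      = pochhammer (g+1) (Suc m) / fact (Suc m)"
  proof -
    have e1: "pochhammer g (Suc m) = g * pochhammer (g+1) m" by (simp add: pochhammer_rec)
    have e2: "pochhammer (g+1) (Suc m) = pochhammer (g+1) m * (g + 1 + real m)" by (simp add: pochhammer_Suc)
    have e3: "(fact (Suc m)::real) = (real m + 1) * fact m" by simp
    have fp: "(fact m::real) > 0" by simp
    define K where "K = real m + 1"
    have K: "K > 0" unfolding K_def by simp
    have gen: "pochhammer (g+1) m / fact m + g*pochhammer (g+1) m/(K*fact m) = pochhammer (g+1) m*(g+K)/(K*fact m)"
      using K fp by (simp add: field_simps)
    have ee: "g + 1 + real m = g + K" "real m + 1 = K" unfolding K_def by simp_all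
    show ?thesis unfolding e1 e2 e3 ee using gen
      by (simp add: mult.commute)
  qed
  then show ?case using Suc by simp
qed

lemma poch_base:
  fixes b :: real
  shows "pochhammer (b - real k + 1) k * (real k - b) = (-1)^(k+1) * b * pochhammer (1-b) k"
proof -
  have "pochhammer (b - real k + 1) k = (-1)^k * pochhammer (-b) k"
    by (rule pochhammer_minus')
  moreover have "pochhammer (-b) k * (real k - b) = pochhammer (-b) (Suc k)"
    by (simp add: pochhammer_Suc)
  moreover have "pochhammer (-b) (Suc k) = -b * pochhammer (1-b) k"
    by (simp add: pochhammer_rec)
  ultimately show ?thesis by (simp add: mult.assoc)
qed

lemma poch_step:
  fixes b :: real
  shows "pochhammer (b - real k) (k + Suc L) = (-1)^k * b * pochhammer (1-b) k * pochhammer (1+b) L"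
proof -
  have "pochhammer (b - real k) (k + Suc L) = pochhammer (b - real k) k * pochhammer (b - real k + real k) (Suc L)"
    by (rule pochhammer_product')
  moreover have "pochhammer (b - real k) k = (-1)^k * pochhammer (1-b) k"
    using pochhammer_minus'[of "b - 1" k] by (simp add: algebra_simps)
  moreover have "pochhammer b (Suc L) = b * pochhammer (1+b) L"
    by (simp add: pochhammer_rec add.commute)
  ultimately show ?thesis by simp
qed

lemma Ck_identity:
  fixes b :: real
  assumes b: "0 < b" "b < 1"
  shows "(-1)^(k+1)*b/(fact k*(real k-b)) =
     pochhammer (b-real k+1) (L+k)/(pochhammer (1-b) k * fact (L+k))
     - (-1)^k*b*(\<Sum>j\<in>{1..L}. pochhammer (1+b) (j-1)/fact (j+k))"
proof (induction L)
  case 0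
  have pp: "pochhammer (1-b) k > 0" using b by (intro pochhammer_pos) simp
  have kb: "real k - b \<noteq> 0" using b by (cases k) auto
  have fk: "(fact k::real) > 0" by simp
  from poch_base[of b k] have "pochhammer (b - real k + 1) k = (-1)^(k+1) * b * pochhammer (1-b) k / (real k - b)"
    using kb by (simp add: field_simps)
  then show ?case using pp kb fk
    apply (simp add: field_simps)
    apply (drule arg_cong[where f="\<lambda>z. fact k * z"])
    apply (simp add: algebra_simps)
    done
next
  case (Suc L)
  have pp: "pochhammer (1-b) k > 0" using b by (intro pochhammer_pos) simp
  define P where "P = pochhammer (b-real k+1) (L+k)"
  define F where "F = (fact (L+k) :: real)"
  have F: "F > 0" unfolding F_def by simp
  have e1: "pochhammer (b-real k+1) (Suc L+k) = P * (b + real L + 1)"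
    unfolding P_def by (simp add: pochhammer_Suc algebra_simps)
  have e2: "(fact (Suc L+k)::real) = (real L + real k + 1) * F"
    unfolding F_def by (simp add: algebra_simps)
  have e3: "(b - real k) * P = (-1)^k * b * pochhammer (1-b) k * pochhammer (1+b) L"
  proof -
    have "pochhammer (b - real k) (Suc (L+k)) = (b - real k) * P"
      unfolding P_def by (simp add: pochhammer_rec algebra_simps)
    moreover have "Suc (L+k) = k + Suc L" by simp
    ultimately show ?thesis using poch_step[of b k L] by simp
  qed
  have sum: "(\<Sum>j\<in>{1..Suc L}. pochhammer (1+b) (j-1)/fact (j+k)) =
      (\<Sum>j\<in>{1..L}. pochhammer (1+b) (j-1)/fact (j+k)) + pochhammer (1+b) L/((real L + real k + 1) * F)"
  proof -
    have "(\<Sum>j\<in>{1..Suc L}. pochhammer (1+b) (j-1)/fact (j+k)) =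
      (\<Sum>j\<in>{1..L}. pochhammer (1+b) (j-1)/fact (j+k)) + pochhammer (1+b) (Suc L - 1)/fact (Suc L+k)"
      by (subst sum.cl_ivl_Suc) simp
    then show ?thesis using e2 by simp
  qed
  have key: "P * (b + real L + 1)/(pochhammer (1-b) k * ((real L + real k + 1) * F))
     - (-1)^k*b*(pochhammer (1+b) L/((real L + real k + 1) * F))
     = P/(pochhammer (1-b) k * F)"
  proof -
    define Q where "Q = real L + real k + 1"
    define R where "R = pochhammer (1-b) k"
    define T where "T = (-1)^k*b*pochhammer (1+b) L"
    have pos: "Q > 0" unfolding Q_def by simp
    have R: "R > 0" unfolding R_def using pp .
    have "P * (b + real L + 1) - T * R = P * Q"
      using e3 unfolding Q_def T_def R_def by (simp add: algebra_simps)
    then have "P * (b + real L + 1)/(R * (Q * F)) - T*(1/(Q * F)) = P/(R * F)"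
      using R F pos by (simp add: field_simps)
    then show ?thesis unfolding Q_def[symmetric] R_def[symmetric] T_def by (simp add: algebra_simps)
  qed
  show ?case unfolding e1 e2 sum using Suc key unfolding P_def F_def by (simp add: algebra_simps)
qed



lemma binom_rem:
  fixes b u :: real
  assumes b: "0 < b" and u: "0 \<le> u" "u < 1"
  shows "(\<Sum>i<L. pochhammer (1+b) i / fact i * u^i) \<le> (1-u) powr (-1-b)"
proof (cases "u = 0 \<or> L = 0")
  case True
  then show ?thesis
  proof
    assume "u = 0"
    then have "(\<Sum>i<L. pochhammer (1+b) i / fact i * u^i) = (\<Sum>i<L. if i = 0 then 1 else 0)"
      by (intro sum.cong) auto
    also have "\<dots> \<le> 1" by (simp add: sum.delta')
    finally show ?thesis using \<open>u = 0\<close> by simp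
  qed simp
next
  case False
  then have u0: "0 < u" and L0: "0 < L" using u by auto
  define d where "d = (\<lambda>m v. pochhammer (1+b) m * (1-v) powr (-1-b-real m))"
  have "\<exists>t::real. 0 < t \<and> t < u \<and>
      d 0 u = (\<Sum>m<L. (d m 0 / fact m) * u ^ m) + (d L t / fact L) * u ^ L"
  proof (rule Maclaurin[OF u0 L0 refl])
    show "\<forall>m t. m < L \<and> 0 \<le> t \<and> t \<le> u \<longrightarrow> DERIV (d m) t :> d (Suc m) t"
    proof (intro allI impI)
      fix m t assume "m < L \<and> 0 \<le> t \<and> t \<le> u"
      then have t1: "t < 1" using u by auto
      have "DERIV (\<lambda>v. pochhammer (1+b) m * (1-v) powr (-1-b-real m)) t :>
          pochhammer (1+b) m * ((-1-b-real m) * (1-t) powr (-1-b-real m - 1) * (-1))"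
        using t1 by (intro derivative_eq_intros refl) auto
      moreover have "pochhammer (1+b) m * ((-1-b-real m) * (1-t) powr (-1-b-real m - 1) * (-1)) = d (Suc m) t"
        unfolding d_def by (simp add: pochhammer_Suc algebra_simps)
      ultimately show "DERIV (d m) t :> d (Suc m) t" unfolding d_def by simp
    qed
  qed
  then obtain t where t: "0 < t" "t < u" "d 0 u = (\<Sum>m<L. (d m 0 / fact m) * u ^ m) + (d L t / fact L) * u ^ L"
    by blast
  have "d L t \<ge> 0" unfolding d_def using b by (intro mult_nonneg_nonneg pochhammer_nonneg) auto
  then have "(d L t / fact L) * u ^ L \<ge> 0" using u by simp
  moreover have "d 0 u = (1-u) powr (-1-b)" unfolding d_def by simp
  moreover have "(\<Sum>m<L. (d m 0 / fact m) * u ^ m) = (\<Sum>i<L. pochhammer (1+b) i / fact i * u^i)"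
    unfolding d_def by simp
  ultimately show ?thesis using t(3) by linarith
qed



lemma poch_le_poch:
  fixes x y :: real
  assumes "0 \<le> x" "x \<le> y"
  shows "pochhammer x L \<le> pochhammer y L"
  unfolding pochhammer_prod using assms by (intro prod_mono) auto

lemma tele:
  fixes b :: real
  assumes b: "0 < b" "b < 1"
  shows "1/(real n+1-b) - fact (n+1) * (\<Sum>i<L. pochhammer (1+b) i / fact (i+n+2))
     = fact (n+1) * pochhammer (1+b) L / ((real n+1-b) * fact (L+n+1))"
proof (induction L)
  case 0
  have "(fact (n+1)::real) > 0" by simp
  then show ?case by simp
next
  case (Suc L)
  define P where "P = pochhammer (1+b) L"
  define F where "F = (fact (L+n+1)::real)"
  define Q where "Q = real n + 1 - b"
  define G where "G = (fact (n+1)::real)"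
  define K where "K = real L + real n + 2"
  have Q: "Q > 0" unfolding Q_def using b by simp
  have F: "F > 0" unfolding F_def by simp
  have K: "K > 0" unfolding K_def by simp
  have e1: "(fact (L+n+2)::real) = K * F"
  proof -
    have "(fact (Suc (L+n+1))::real) = of_nat (Suc (L+n+1)) * fact (L+n+1)" by (rule fact_Suc)
    moreover have "Suc (L+n+1) = L+n+2" by simp
    ultimately show ?thesis unfolding K_def F_def by simp
  qed
  have e2: "(fact (Suc L+n+1)::real) = K * F" using e1 by (simp add: algebra_simps)
  have e3: "pochhammer (1+b) (Suc L) = P * (1+b+real L)" unfolding P_def by (simp add: pochhammer_Suc)
  have "G * P / (Q * F) - G * (P / (K*F)) = G * (P * (1+b+real L)) / (Q * (K * F))"
  proof -
    have "K - Q = 1 + b + real L" unfolding K_def Q_def by simp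
    moreover have "G * P / (Q * F) - G * (P / (K*F)) = G * (P * (K - Q)) / (Q * (K * F))"
      using Q F K by (simp add: field_simps)
    ultimately show ?thesis by simp
  qed
  have s: "(\<Sum>i<Suc L. pochhammer (1+b) i / fact (i+n+2)) = (\<Sum>i<L. pochhammer (1+b) i / fact (i+n+2)) + P/(K*F)"
    unfolding P_def e1[symmetric] by simp
  have "1/(real n+1-b) - fact (n+1) * (\<Sum>i<Suc L. pochhammer (1+b) i / fact (i+n+2))
      = (1/(real n+1-b) - fact (n+1) * (\<Sum>i<L. pochhammer (1+b) i / fact (i+n+2))) - G * (P/(K*F))"
    unfolding s G_def by (simp add: algebra_simps)
  also have "\<dots> = G * P / (Q * F) - G * (P / (K*F))"
    unfolding Suc G_def P_def Q_def F_def by simp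
  also have "\<dots> = G * (P * (1+b+real L)) / (Q * (K * F))" by fact
  also have "\<dots> = fact (n+1) * pochhammer (1+b) (Suc L) / ((real n+1-b) * fact (Suc L+n+1))"
    unfolding e2 e3 G_def Q_def by simp
  finally show ?case .
qed

lemma exp_bound_nat:
  fixes n :: nat
  assumes "1 \<le> n"
  shows "real (n+1) * real n ^ n \<le> 4 * exp (real n * (real n - 1))"
proof -
  have q0: "1 + (real n - 1) + (real n - 1)^2/2 \<le> exp (real n - 1)"
    using exp_lower_Taylor_quadratic[of "real n - 1"] assms by simp
  have "1 + (real n - 1) + (real n - 1)^2/2 = (real n^2 + 1)/2"
    by (simp add: power2_eq_square field_simps)
  with q0 have q: "(real n^2 + 1)/2 \<le> exp (real n - 1)" by simp
  have ex: "exp (real n * (real n - 1)) = exp (real n - 1) ^ n"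
    by (simp add: exp_of_nat_mult[symmetric])
  have c: "real (n+1) * real n ^ n \<le> 4 * ((real n^2 + 1)/2) ^ n"
  proof (cases "n \<le> 2")
    case True
    with assms have "n = 1 \<or> n = 2" by auto
    then show ?thesis by (auto simp: power2_eq_square)
  next
    case False
    then have n3: "real n \<ge> 3" by simp
    have "(3*real n - 1)*(real n - 3) \<ge> 0" using n3 by (intro mult_nonneg_nonneg) auto
    then have "5/3 * real n \<le> (real n^2 + 1)/2"
      by (simp add: power2_eq_square algebra_simps)
    then have A: "(5/3 * real n)^n \<le> ((real n^2 + 1)/2)^n"
      by (intro power_mono) auto
    have B: "1 + real n * (2/3) \<le> (1 + 2/3::real)^n"
      by (rule Bernoulli_inequality) simp
    have C: "(5/3 * real n)^n = (1 + 2/3::real)^n * real n ^ n" by (simp add: power_mult_distrib[symmetric])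
    have "(1 + real n * (2/3)) * real n ^ n \<le> (1 + 2/3::real)^n * real n ^ n"
      by (rule mult_right_mono[OF B]) simp
    also have "\<dots> \<le> ((real n^2 + 1)/2)^n" using A C by simp
    finally have D: "(1 + real n * (2/3)) * real n ^ n \<le> ((real n^2 + 1)/2)^n" .
    have "real (n+1) * real n ^ n \<le> (4 * (1 + real n * (2/3))) * real n ^ n"
      by (rule mult_right_mono) auto
    also have "\<dots> = 4 * ((1 + real n * (2/3)) * real n ^ n)" by (simp only: mult.assoc)
    also have "\<dots> \<le> 4 * ((real n^2 + 1)/2)^n" using D by (rule mult_left_mono) simp
    finally show ?thesis .
  qed
  have "((real n^2 + 1)/2) ^ n \<le> exp (real n - 1) ^ n"
    by (intro power_mono q) (simp add: add_nonneg_nonneg)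
  then show ?thesis using c ex by simp
qed



lemma fact_split_prod: "fact (m + n) = fact m * (\<Prod>i\<in>{1..n}. m + i :: nat)"
  by (induction n) (auto simp: prod.cl_ivl_Suc algebra_simps)

lemma comb_ineq:
  fixes n L :: nat
  shows "(n+L)^n * fact n * fact (L+1) \<le> n^n * fact (n+L+1)"
proof -
  have "(n+L)^n * fact n = (\<Prod>i\<in>{1..n}. (n+L)*i)"
    by (simp add: prod.distrib fact_prod)
  also have "\<dots> \<le> (\<Prod>i\<in>{1..n}. n*(L+1+i))"
  proof (rule prod_mono)
    fix i assume i: "i \<in> {1..n}"
    then have Li: "L*i \<le> L*n" by (intro mult_le_mono2) auto
    have "(n+L)*i = n*i + L*i" by (simp add: algebra_simps)
    moreover have "n*(L+1+i) = n*i + L*n + n" by (simp add: algebra_simps)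
    ultimately show "0 \<le> (n+L)*i \<and> (n+L)*i \<le> n*(L+1+i)" using Li by linarith
  qed
  also have "\<dots> = n^n * (\<Prod>i\<in>{1..n}. L+1+i)"
    unfolding prod.distrib by simp
  finally have "(n+L)^n * fact n * fact (L+1) \<le> n^n * (\<Prod>i\<in>{1..n}. L+1+i) * fact (L+1)"
    by (rule mult_right_mono) simp
  also have "\<dots> = n^n * fact (n+L+1)"
    using fact_split_prod[of "L+1" n] by (simp add: algebra_simps)
  finally show ?thesis .
qed

lemma final_ineq:
  fixes b :: real and n L :: nat
  assumes b: "0 < b" "b < 1" and n: "1 \<le> n" and L: "1 \<le> L"
  shows "b*(real n+1)*pochhammer (1+b) L/((real n+1-b)*fact(n+L+1))
     \<le> exp ((real n-b)^2+real n-b)/(pochhammer (1-b) n*(real n-b)*real(n+L) powr (real n-b))"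
proof -
  define N where "N = n + L"
  define X where "X = (real n-b)^2+real n-b"
  have N1: "real N \<ge> 1" unfolding N_def using n by simp
  have Pp: "pochhammer (1+b) L \<le> fact (L+1)"
  proof -
    have "pochhammer (1+b) L \<le> pochhammer 2 L" using b by (intro poch_le_poch) auto
    also have "pochhammer (2::real) L = fact (L+1)"
      by (simp add: pochhammer_fact pochhammer_rec)
    finally show ?thesis .
  qed
  have Pm: "b * pochhammer (1-b) n \<le> fact n / 4"
  proof -
    obtain n' where nn: "n = Suc n'" using n by (cases n) auto
    have "pochhammer (1-b) n = (1-b) * pochhammer (2-b) n'"
      unfolding nn by (simp add: pochhammer_rec)
    moreover have "pochhammer (2-b) n' \<le> pochhammer 2 n'" using b by (intro poch_le_poch) auto
    moreover have "pochhammer (2::real) n' = fact n"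
      unfolding nn by (simp add: pochhammer_fact pochhammer_rec)
    moreover have "b * (1-b) \<le> 1/4"
    proof -
      have "(b-1/2)^2 = b*b - b + 1/4" by (simp add: power2_eq_square field_simps)
      moreover have "b*(1-b) = b - b*b" by (simp add: algebra_simps)
      moreover have "(b-1/2)^2 \<ge> 0" by simp
      ultimately show ?thesis by linarith
    qed
    moreover have "pochhammer (2-b) n' \<ge> 0" using b by (intro pochhammer_nonneg) auto
    moreover have "b * (1-b) \<ge> 0" using b by simp
    ultimately have "(b*(1-b)) * pochhammer (2-b) n' \<le> (1/4) * fact n"
      by (intro mult_mono) auto
    moreover have "b * pochhammer (1-b) n = (b*(1-b)) * pochhammer (2-b) n'"
      using \<open>pochhammer (1-b) n = (1-b) * pochhammer (2-b) n'\<close> by simp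
    ultimately have "b * pochhammer (1-b) n \<le> (1/4) * fact n" by linarith
    then show ?thesis by simp
  qed
  have pm_pos: "pochhammer (1-b) n > 0" using b by (intro pochhammer_pos) simp
  have pp_pos: "pochhammer (1+b) L > 0" using b by (intro pochhammer_pos) simp
  have Npow: "real N powr (real n - b) \<le> real N ^ n"
  proof -
    have "real N powr (real n - b) \<le> real N powr (real n)"
      using N1 b by (intro powr_mono) auto
    also have "\<dots> = real N ^ n" using N1 by (simp add: powr_realpow)
    finally show ?thesis .
  qed
  have Npos: "real N powr (real n - b) > 0" using N1 by simp
  have comb: "real N ^ n * fact n * fact (L+1) \<le> real n ^ n * fact (N+1)"
  proof -
    have "real (N^n * fact n * fact (L+1)) \<le> real (n^n * fact (n+L+1))"
      unfolding N_def by (rule of_nat_mono[OF comb_ineq])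
    then show ?thesis unfolding N_def by (simp only: of_nat_mult of_nat_power of_nat_fact)
  qed
  have eb: "real (n+1) * real n ^ n \<le> 4 * exp X"
  proof -
    have "real n * (real n - 1) \<le> X"
    proof -
      have "(real n - 1) * real n \<le> (real n - b) * (real n - b + 1)"
        using b n by (intro mult_mono) auto
      then show ?thesis unfolding X_def by (simp add: power2_eq_square algebra_simps)
    qed
    then have "exp (real n * (real n - 1)) \<le> exp X" by simp
    then show ?thesis using exp_bound_nat[OF n] by linarith
  qed
  have main: "b*(real n+1)*pochhammer (1+b) L * (pochhammer (1-b) n*(real n-b)*real N powr (real n-b))
      \<le> exp X * ((real n+1-b)*fact(N+1))"
  proof -
    have "b*(real n+1)*pochhammer (1+b) L * (pochhammer (1-b) n*(real n-b)*real N powr (real n-b))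
        = (real n+1) * pochhammer (1+b) L * (b * pochhammer (1-b) n) * (real n-b) * real N powr (real n-b)"
      by (simp add: algebra_simps)
    also have "\<dots> \<le> (real n+1) * fact (L+1) * (fact n / 4) * real n * real N ^ n"
      using Pp Pm Npow b pm_pos pp_pos Npos n
      by (intro mult_mono mult_nonneg_nonneg) auto
    also have "\<dots> = (real n+1) * real n / 4 * (real N ^ n * fact n * fact (L+1))"
      by (simp add: field_simps)
    also have "\<dots> \<le> (real n+1) * real n / 4 * (real n ^ n * fact (N+1))"
      using comb by (intro mult_left_mono) auto
    also have "\<dots> = real n / 4 * (real (n+1) * real n ^ n) * fact (N+1)"
      by (simp add: field_simps)
    also have "\<dots> \<le> real n / 4 * (4 * exp X) * fact (N+1)"
      using eb by (intro mult_right_mono mult_left_mono) auto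
    also have "\<dots> = real n * exp X * fact (N+1)" by simp
    also have "\<dots> \<le> (real n+1-b) * exp X * fact (N+1)"
      using b by (intro mult_right_mono) auto
    finally show ?thesis by (simp add: algebra_simps)
  qed
  have d1: "(real n+1-b)*fact(N+1) > 0" using b by simp
  have d2: "pochhammer (1-b) n*(real n-b)*real N powr (real n-b) > 0"
    using pm_pos Npos b n by (intro mult_pos_pos) auto
  have "b*(real n+1)*pochhammer (1+b) L/((real n+1-b)*fact(N+1))
     \<le> exp X/(pochhammer (1-b) n*(real n-b)*real N powr (real n-b))"
    using main d1 d2 by (simp add: divide_le_eq le_divide_eq mult.commute mult.left_commute)
  then show ?thesis unfolding N_def X_def by (simp add: add.assoc)
qed



lemma nonint_shift:
  fixes b :: real
  assumes "0 < b" "b < 1"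
  shows "b + of_int c \<notin> \<int>\<^sub>\<le>\<^sub>0"
proof
  assume "b + of_int c \<in> \<int>\<^sub>\<le>\<^sub>0"
  then have "b + of_int c \<in> \<int>" by auto
  then have "b + of_int c - of_int c \<in> \<int>" by (intro Ints_diff) auto
  then have "b \<in> \<int>" by simp
  then obtain m where "b = of_int m" by (auto elim: Ints_cases)
  with assms show False by auto
qed

lemma nonint_minus_nat:
  fixes b :: real
  assumes "0 < b" "b < 1"
  shows "b - real k \<notin> \<int>\<^sub>\<le>\<^sub>0" "1 - b + real k \<notin> \<int>\<^sub>\<le>\<^sub>0" "1 - b \<notin> \<int>\<^sub>\<le>\<^sub>0" "1 + b \<notin> \<int>\<^sub>\<le>\<^sub>0" "- b \<notin> \<int>\<^sub>\<le>\<^sub>0"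
proof -
  show "b - real k \<notin> \<int>\<^sub>\<le>\<^sub>0" using nonint_shift[OF assms, of "- int k"] by simp
  have "1 - b \<in> {0<..<1}" "1 - b + real k > 0" "1 + b > 0" using assms by auto
  then show "1 - b + real k \<notin> \<int>\<^sub>\<le>\<^sub>0" "1 - b \<notin> \<int>\<^sub>\<le>\<^sub>0" "1 + b \<notin> \<int>\<^sub>\<le>\<^sub>0"
    by (auto elim!: nonpos_Ints_cases)
  show "- b \<notin> \<int>\<^sub>\<le>\<^sub>0"
  proof
    assume "- b \<in> \<int>\<^sub>\<le>\<^sub>0"
    then have "- b \<in> \<int>" by auto
    then have "- (- b) \<in> \<int>" by (rule Ints_minus)
    then obtain m where "b = of_int m" by (auto elim: Ints_cases)
    with assms show False by auto
  qed
qed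

lemma B_conv:
  fixes b :: real
  assumes b: "0 < b" "b < 1" and j: "1 \<le> j"
  shows "B_coef n b (n+j) * real j = -b/Gamma(1-b) * (pochhammer (1+b) (j-1)/fact (j-1))"
proof -
  have "Gamma (1+b) > 0" using b by simp
  have g1: "Gamma (real j + b) = Gamma (1+b) * pochhammer (1+b) (j-1)"
  proof -
    have "pochhammer (1+b) (j-1) = Gamma (1+b+real (j-1))/Gamma (1+b)"
      by (rule pochhammer_Gamma[OF nonint_minus_nat(4)[OF b]])
    moreover have "1+b+real (j-1) = real j + b" using j by (simp add: of_nat_diff)
    moreover have "Gamma (1+b) \<noteq> 0" using \<open>Gamma (1+b) > 0\<close> by simp
    ultimately show ?thesis by (simp add: add.commute)
  qed
  have g2: "Gamma (1 - b) = -b * Gamma (-b)"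
    using Gamma_plus1[OF nonint_minus_nat(5)[OF b]] by simp
  have f: "(fact j :: real) = real j * fact (j-1)"
    using j by (metis Suc_diff_1 fact_Suc of_nat_fact of_nat_mult less_le_trans zero_less_one)
  have G1: "Gamma (1+b) > 0" using b by simp
  have G2: "Gamma (1-b) > 0" using b by simp
  have "B_coef n b (n+j) = Gamma (real j + b) / (Gamma (-b) * Gamma (1+b) * fact j)"
    unfolding B_coef_def by simp
  also have "\<dots> = Gamma (1+b) * pochhammer (1+b) (j-1) / ((Gamma (1-b) / (-b)) * Gamma (1+b) * (real j * fact (j-1)))"
    using g1 g2 f b by simp
  finally show ?thesis using G1 G2 b j by (simp add: field_simps less_imp_neq[symmetric] G2[THEN less_imp_neq, symmetric])
qed

lemma A_conv:
  fixes b :: real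
  assumes b: "0 < b" "b < 1"
  shows "A_coef n (n+L) b k = pochhammer (b-real k+1) (L+k)/(Gamma(1-b)*pochhammer (1-b) k*fact (L+k))"
proof -
  have nz: "b - real k \<notin> \<int>\<^sub>\<le>\<^sub>0" by (rule nonint_minus_nat(1)[OF b])
  have reidx: "(\<Sum>p\<in>{int n + 1 - int k .. int (n+L)}.
            Gamma (real_of_int (p - int n) + b) / (Gamma (b - real k) * fact (nat (p - int n + int k))))
        = (\<Sum>q\<in>{1..L+k}. pochhammer (b - real k) q / fact q)"
  proof (rule sum.reindex_bij_witness[where i = "\<lambda>q. int q + int n - int k" and j = "\<lambda>p. nat (p - int n + int k)"])
    fix p assume p: "p \<in> {int n + 1 - int k .. int (n+L)}"
    then have q: "p - int n + int k \<ge> 1" by simp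
    define q where "q = nat (p - int n + int k)"
    have pq: "real_of_int (p - int n) + b = (b - real k) + real q"
      unfolding q_def using q by simp
    show "pochhammer (b - real k) (nat (p - int n + int k)) / fact (nat (p - int n + int k)) =
        Gamma (real_of_int (p - int n) + b) / (Gamma (b - real k) * fact (nat (p - int n + int k)))"
      unfolding q_def[symmetric] pq pochhammer_Gamma[OF nz] by simp
  qed auto
  have "1 + (\<Sum>q\<in>{1..L+k}. pochhammer (b - real k) q / fact q) = (\<Sum>q\<le>L+k. pochhammer (b - real k) q / fact q)"
    by (simp add: sum.atMost_shift atLeast0AtMost[symmetric] sum.atLeast_Suc_atMost_Suc_shift[symmetric] del: sum.cl_ivl_Suc)
      (simp add: atMost_atLeast0 sum.atLeast_Suc_atMost)
  also have "\<dots> = pochhammer (b - real k + 1) (L+k) / fact (L+k)" by (rule hockey)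
  finally have S: "1 + (\<Sum>q\<in>{1..L+k}. pochhammer (b - real k) q / fact q) = pochhammer (b - real k + 1) (L+k) / fact (L+k)" .
  have "Gamma (1-b) > 0" using b by simp
  have "Gamma (real k + 1 - b) = Gamma (1-b) * pochhammer (1-b) k"
    using pochhammer_Gamma[OF nonint_minus_nat(3)[OF b], of k] b \<open>Gamma (1-b) > 0\<close> by (simp add: field_simps algebra_simps)
  then show ?thesis unfolding A_coef_def reidx S by simp
qed



lemma sum_split0: fixes n :: nat shows "(\<Sum>i\<le>n. f i) = f 0 + (\<Sum>i\<in>{1..n}. (f i :: real))"
proof -
  have "{..n} = insert 0 {1..n}" by auto
  then show ?thesis by simp
qed

lemma pow_div_powr:
  fixes d b :: real
  assumes "d > 0"
  shows "(-d)^k / d powr (1+b) = (-1)^k * d powr (real k - 1 - b)"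
proof -
  have e1: "(-d)^k = (-1)^k * d^k" by (rule power_minus)
  have e2: "d^k = d powr real k" using powr_realpow[OF assms] by simp
  have e3: "d powr (real k) / d powr (1+b) = d powr (real k - (1+b))" by (rule powr_diff[symmetric])
  have e4: "real k - (1+b) = real k - 1 - b" by simp
  show ?thesis unfolding e1 e2 using e3 e4 by (simp add: times_divide_eq_right[symmetric] del: times_divide_eq_right)
qed

lemma spow:
  fixes s b :: real assumes "s > 0"
  shows "s powr (- b - real j) * s^(j+k) = s powr (real k - b)"
proof -
  have "s^(j+k) = s powr real (j+k)" using powr_realpow[OF assms, of "j+k"] by (simp del: of_nat_add)
  moreover have "s powr (- b - real j) * s powr real (j+k) = s powr (- b - real j + real (j+k))"
    by (rule powr_add[symmetric])
  moreover have "- b - real j + real (j+k) = real k - b" by simp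
  ultimately show ?thesis by simp
qed

lemma spow2:
  fixes s b :: real assumes "s > 0"
  shows "s powr (- b) * s^k = s powr (real k - b)"
  using spow[OF assms, of b 0 k] by simp

theorem theorem4:
  fixes a b :: real and alpha alpha' :: "real \<Rightarrow> real"
    and x :: "real \<Rightarrow> real" and D :: "nat \<Rightarrow> real \<Rightarrow> real"
    and n N :: nat and t :: real
  assumes ab: "a < b"
    and alpha_range: "\<forall>s\<in>{a..b}. 0 < alpha s \<and> alpha s < 1"
    and alpha_deriv: "\<forall>s\<in>{a..b}. (alpha has_real_derivative alpha' s) (at s within {a..b})"
    and alpha'_cont: "continuous_on {a..b} alpha'"
    and n_pos: "1 \<le> n"
    and N_ge: "n + 1 \<le> N"
    and D0: "D 0 = x"
    and D_deriv: "\<forall>k\<le>n. \<forall>s\<in>{a..b}. (D k has_real_derivative D (Suc k) s) (at s within {a..b})"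
    and D_cont: "continuous_on {a..b} (D (Suc n))"
    and t_in: "t \<in> {a<..b}"
  shows "\<bar>marchaud_left a alpha x t - S1 a alpha D n N t\<bar>
           \<le> (SUP \<tau>\<in>{a..t}. \<bar>D (Suc n) \<tau>\<bar>) *
             (exp ((real n - alpha t)\<^sup>2 + real n - alpha t) /
              (Gamma (real n + 1 - alpha t) * (real n - alpha t) * real N powr (real n - alpha t)))
             * (t - a) powr (real n + 1 - alpha t)"
proof -
  define \<beta> where "\<beta> = alpha t"
  define s where "s = t - a"
  define L where "L = N - n"
  have t: "a < t" "t \<le> b" using t_in by auto
  have s: "s > 0" unfolding s_def using t by simp
  have \<beta>: "0 < \<beta>" "\<beta> < 1" unfolding \<beta>_def using alpha_range t by auto
  have NL: "N = n + L" "1 \<le> L" unfolding L_def using N_ge by auto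
  define M where "M = (SUP \<tau>\<in>{a..t}. \<bar>D (Suc n) \<tau>\<bar>)"
  define P where "P = (\<lambda>\<tau>. \<Sum>i\<le>n. D i t * (\<tau> - t)^i / fact i)"
  define y where "y = (\<lambda>\<tau>. x \<tau> - P \<tau>)"
  define Gm where "Gm = Gamma (1-\<beta>)"
  have Gm: "Gm > 0" unfolding Gm_def using \<beta> by simp
  have sub: "{a..t} \<subseteq> {a..b}" using t by auto
  have Dsub: "\<And>i \<tau>. \<tau> \<in> {a..t} \<Longrightarrow> i \<le> n \<Longrightarrow> (D i has_field_derivative D (Suc i) \<tau>) (at \<tau> within {a..t})"
    using D_deriv sub by (meson DERIV_subset subsetD)
  have Dc: "continuous_on {a..t} (D (Suc n))" using D_cont sub by (rule continuous_on_subset)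
  have bdd: "bdd_above ((\<lambda>\<tau>. \<bar>D (Suc n) \<tau>\<bar>) ` {a..t})"
    by (intro bounded_imp_bdd_above compact_imp_bounded compact_continuous_image continuous_intros Dc) simp
  have Mb: "\<bar>D (Suc n) \<tau>\<bar> \<le> M" if "\<tau> \<in> {a..t}" for \<tau>
    unfolding M_def using that bdd by (rule cSUP_upper)
  have M0: "M \<ge> 0" using Mb[of t] t by force
  have tay: "\<And>\<tau>. \<tau> \<in> {a..t} \<Longrightarrow> \<bar>y \<tau>\<bar> \<le> M * (t - \<tau>)^(Suc n) / fact n"
  proof -
    fix \<tau> assume \<tau>: "\<tau> \<in> {a..t}"
    have "norm (D 0 \<tau> - (\<Sum>i\<le>n. D i t * (\<tau>-t) ^ i / (fact i))) \<le> M * norm(\<tau> - t)^(Suc n) / fact n"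
      by (rule field_Taylor[where S="{a..t}"]) (use Dsub Mb \<tau> t in auto)
    moreover have "norm (\<tau> - t) = t - \<tau>" using \<tau> by auto
    ultimately show "\<bar>y \<tau>\<bar> \<le> M * (t - \<tau>)^(Suc n) / fact n"
      unfolding y_def P_def D0 by simp
  qed
  have yt: "y t = 0" using tay[of t] t by simp
  have xc: "continuous_on {a..b} x"
    unfolding D0[symmetric]
  proof (rule DERIV_continuous_on)
    fix z assume "z \<in> {a..b}"
    then show "(D 0 has_field_derivative D (Suc 0) z) (at z within {a..b})" using D_deriv by auto
  qed
  have yc: "continuous_on {a..t} y"
    unfolding y_def P_def using continuous_on_subset[OF xc sub] by (intro continuous_intros) auto
  define g where "g = (\<lambda>\<tau>. y \<tau> * (t - \<tau>) powr (-1-\<beta>))"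
  have gb: "\<bar>g \<tau>\<bar> \<le> M / fact n * (t - \<tau>) powr (real n - \<beta>)" if "\<tau> \<in> {a..t}" for \<tau>
  proof (cases "\<tau> = t")
    case True then show ?thesis by (simp add: g_def yt)
  next
    case False
    with that have d: "t - \<tau> > 0" by auto
    have "\<bar>g \<tau>\<bar> = \<bar>y \<tau>\<bar> * (t-\<tau>) powr (-1-\<beta>)" unfolding g_def by (simp add: abs_mult)
    also have "\<dots> \<le> M * (t - \<tau>)^(Suc n) / fact n * (t-\<tau>) powr (-1-\<beta>)"
      by (rule mult_right_mono[OF tay[OF that]]) simp
    also have "\<dots> = M / fact n * ((t-\<tau>)^(Suc n) * (t-\<tau>) powr (-1-\<beta>))"
      by simp
    also have "(t-\<tau>)^(Suc n) * (t-\<tau>) powr (-1-\<beta>) = (t - \<tau>) powr (real n - \<beta>)"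
    proof -
      have e: "(t-\<tau>)^(Suc n) = (t-\<tau>) powr (real n + 1)" using powr_realpow[OF d, of "Suc n"] by (simp add: add.commute)
      have "(t-\<tau>) powr (real n + 1) * (t-\<tau>) powr (-1-\<beta>) = (t-\<tau>) powr (real n + 1 + (-1-\<beta>))"
        by (simp only: powr_add)
      then show ?thesis unfolding e by simp
    qed
    finally show ?thesis .
  qed
  have pint: "((\<lambda>\<tau>. M / fact n * (t - \<tau>) powr (real n - \<beta>)) has_integral M / fact n * (s powr (real n - \<beta> + 1)/(real n - \<beta> + 1))) {a..t}"
    unfolding s_def using powr_integral[of a t "real n - \<beta>"] t \<beta> by (intro has_integral_mult_right) auto
  have gint: "g integrable_on {a..t}"
  proof -
    have "continuous_on {a<..<t} g"
    proof -
      have "continuous_on {a<..<t} y" by (rule continuous_on_subset[OF yc]) auto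
      then show ?thesis unfolding g_def by (intro continuous_intros) auto
    qed
    then have meas: "g \<in> borel_measurable (lebesgue_on {a<..<t})"
      by (rule continuous_imp_measurable_on_sets_lebesgue) simp
    have int: "(\<lambda>\<tau>. M / fact n * (t - \<tau>) powr (real n - \<beta>)) integrable_on {a<..<t}"
      using pint has_integral_Icc_iff_Ioo by blast
    have "g integrable_on {a<..<t}"
      by (rule measurable_bounded_by_integrable_imp_integrable[OF meas int]) (use gb in auto)
    then show ?thesis using integrable_on_Icc_iff_Ioo by blast
  qed
  define Ig where "Ig = integral {a..t} g"
  define c1 where "c1 = (\<lambda>k::nat. - (((-1::real)^k) * D k t / fact k))"
  have Pt: "P t = x t" using yt unfolding y_def by simp
  have Pt0: "P t = D 0 t"
  proof -
    have "(\<Sum>i\<in>{1..n}. D i t * (t-t)^i / fact i) = 0" by (intro sum.neutral) auto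
    then show ?thesis unfolding P_def by (simp add: sum_split0[of _ n])
  qed
  have hm_int: "((\<lambda>\<tau>. (x t - x \<tau>) / (t - \<tau>) powr (1 + \<beta>)) has_integral
       (\<Sum>k\<in>{1..n}. c1 k * (s powr (real k - \<beta>)/(real k - \<beta>))) - Ig) {a..t}"
  proof -
    have each: "((\<lambda>\<tau>. c1 k * (t-\<tau>) powr (real k - 1 - \<beta>)) has_integral c1 k * (s powr (real k - \<beta>)/(real k - \<beta>))) {a..t}"
      if "k \<in> {1..n}" for k
    proof -
      have "real k - 1 - \<beta> > -1" using that \<beta> by auto
      from powr_integral[OF _ this, of a t] t
      have "((\<lambda>\<tau>. (t-\<tau>) powr (real k - 1 - \<beta>)) has_integral s powr (real k - \<beta>)/(real k - \<beta>)) {a..t}"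
        unfolding s_def by (simp add: algebra_simps)
      then show ?thesis by (rule has_integral_mult_right)
    qed
    have H: "((\<lambda>\<tau>. (\<Sum>k\<in>{1..n}. c1 k * (t-\<tau>) powr (real k - 1 - \<beta>)) - g \<tau>) has_integral
       (\<Sum>k\<in>{1..n}. c1 k * (s powr (real k - \<beta>)/(real k - \<beta>))) - Ig) {a..t}"
      unfolding Ig_def by (intro has_integral_diff has_integral_sum integrable_integral gint each) auto
    show ?thesis
    proof (rule has_integral_eq[OF _ H])
      fix \<tau> assume \<tau>: "\<tau> \<in> {a..t}"
      show "(\<Sum>k\<in>{1..n}. c1 k * (t-\<tau>) powr (real k - 1 - \<beta>)) - g \<tau> = (x t - x \<tau>) / (t - \<tau>) powr (1 + \<beta>)"
      proof (cases "\<tau> = t")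
        case True then show ?thesis by (simp add: g_def yt)
      next
        case False
        with \<tau> have d: "t - \<tau> > 0" by auto
        have Pt1: "P \<tau> = D 0 t + (\<Sum>k\<in>{1..n}. D k t * (-(t-\<tau>))^k / fact k)"
          unfolding P_def by (simp add: sum_split0[of _ n])
        have xx: "x t - x \<tau> = - (\<Sum>k\<in>{1..n}. D k t * (-(t-\<tau>))^k / fact k) - y \<tau>"
          using Pt Pt0 Pt1 unfolding y_def by simp
        have "(x t - x \<tau>) / (t - \<tau>) powr (1 + \<beta>)
           = - (\<Sum>k\<in>{1..n}. D k t / fact k * ((-(t-\<tau>))^k / (t - \<tau>) powr (1 + \<beta>))) - y \<tau> / (t - \<tau>) powr (1 + \<beta>)"
          unfolding xx by (simp add: diff_divide_distrib sum_divide_distrib)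
        also have "\<dots> = (\<Sum>k\<in>{1..n}. c1 k * (t-\<tau>) powr (real k - 1 - \<beta>)) - g \<tau>"
        proof -
          have s1: "- (\<Sum>k\<in>{1..n}. D k t / fact k * ((-1)^k * (t-\<tau>) powr (real k - 1 - \<beta>))) = (\<Sum>k\<in>{1..n}. c1 k * (t-\<tau>) powr (real k - 1 - \<beta>))"
            unfolding c1_def sum_negf[symmetric] by (intro sum.cong) (simp_all add: algebra_simps)
          have s2: "y \<tau> / (t-\<tau>) powr (1+\<beta>) = g \<tau>"
            unfolding g_def using powr_minus[of "t-\<tau>" "1+\<beta>"] by (simp add: divide_inverse)
          show ?thesis by (simp only: pow_div_powr[OF d] s1 s2)
        qed
        finally show ?thesis by (rule sym)
      qed
    qed
  qed
  have MA: "marchaud_left a alpha x t = x t / (Gm * s powr \<beta>) + \<beta>/Gm * ((\<Sum>k\<in>{1..n}. c1 k * (s powr (real k - \<beta>)/(real k - \<beta>))) - Ig)"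
  proof -
    have "marchaud_left a alpha x t = x t / (Gm * s powr \<beta>) + \<beta> / Gm * integral {a..t} (\<lambda>\<tau>. (x t - x \<tau>) / (t - \<tau>) powr (1 + \<beta>))"
      unfolding marchaud_left_def Gm_def s_def \<beta>_def by simp
    then show ?thesis using integral_unique[OF hm_int] by simp
  qed
  define Jy where "Jy = (\<lambda>j. integral {a..t} (\<lambda>\<tau>. (\<tau>-a)^(j-1) * y \<tau>))"
  have yint: "(\<lambda>\<tau>. (\<tau>-a)^(j-1) * y \<tau>) integrable_on {a..t}" for j
    by (intro integrable_continuous_real continuous_intros yc)
  have V: "V_mom a (D 0) n (n+j) t = real j * ((\<Sum>k\<le>n. D k t / fact k * ((-1)^k * (s^(j+k)*fact(j-1)*fact k/fact(j+k)))) + Jy j)"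
    if j: "j \<in> {1..L}" for j
  proof -
    have each: "((\<lambda>\<tau>. (D k t / fact k * (-1)^k) * ((\<tau>-a)^(j-1)*(t-\<tau>)^k)) has_integral
        (D k t / fact k * (-1)^k) * (s^(j+k)*fact(j-1)*fact k/fact(j+k))) {a..t}" for k
    proof -
      have "j - 1 + k + 1 = j + k" using j by auto
      then have "((\<lambda>\<tau>. (\<tau>-a)^(j-1)*(t-\<tau>)^k) has_integral s^(j+k)*fact(j-1)*fact k/fact(j+k)) {a..t}"
        using beta_poly[of a t "j-1" k] t unfolding s_def by simp
      then show ?thesis by (rule has_integral_mult_right)
    qed
    have H: "((\<lambda>\<tau>. (\<Sum>k\<le>n. (D k t / fact k * (-1)^k) * ((\<tau>-a)^(j-1)*(t-\<tau>)^k)) + (\<tau>-a)^(j-1) * y \<tau>) has_integral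
        (\<Sum>k\<le>n. (D k t / fact k * (-1)^k) * (s^(j+k)*fact(j-1)*fact k/fact(j+k))) + Jy j) {a..t}"
      unfolding Jy_def by (intro has_integral_add has_integral_sum integrable_integral yint each) auto
    have H2: "((\<lambda>\<tau>. (\<tau>-a)^(j-1) * x \<tau>) has_integral
        (\<Sum>k\<le>n. (D k t / fact k * (-1)^k) * (s^(j+k)*fact(j-1)*fact k/fact(j+k))) + Jy j) {a..t}"
    proof (rule has_integral_eq[OF _ H])
      fix \<tau> assume "\<tau> \<in> {a..t}"
      have "x \<tau> = P \<tau> + y \<tau>" unfolding y_def by simp
      moreover have "P \<tau> = (\<Sum>k\<le>n. D k t / fact k * (-1)^k * (t-\<tau>)^k)"
        unfolding P_def
      proof (rule sum.cong[OF refl])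
        fix k
        have "(\<tau> - t)^k = (-1)^k * (t-\<tau>)^k" by (metis minus_diff_eq power_minus)
        then show "D k t * (\<tau> - t) ^ k / fact k = D k t / fact k * (-1) ^ k * (t - \<tau>) ^ k" by simp
      qed
      ultimately show "(\<Sum>k\<le>n. (D k t / fact k * (-1)^k) * ((\<tau>-a)^(j-1)*(t-\<tau>)^k)) + (\<tau>-a)^(j-1) * y \<tau> = (\<tau>-a)^(j-1) * x \<tau>"
        by (simp add: sum_distrib_left sum_distrib_right algebra_simps)
    qed
    have "V_mom a (D 0) n (n+j) t = real j * integral {a..t} (\<lambda>\<tau>. (\<tau>-a)^(j-1) * x \<tau>)"
      unfolding V_mom_def D0 by simp
    also have "\<dots> = real j * ((\<Sum>k\<le>n. (D k t / fact k * (-1)^k) * (s^(j+k)*fact(j-1)*fact k/fact(j+k))) + Jy j)"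
      using integral_unique[OF H2] by simp
    finally show ?thesis by (simp add: mult.assoc)
  qed
  define T where "T = (\<lambda>k. D k t * s powr (real k - \<beta>))"
  define W where "W = (\<lambda>k. \<Sum>j\<in>{1..L}. pochhammer (1+\<beta>) (j-1) / fact (j+k))"
  define cc where "cc = (\<lambda>j. pochhammer (1+\<beta>) (j-1) / fact (j-1))"
  have S1e: "S1 a alpha D n N t = (\<Sum>k\<le>n. T k * A_coef n N \<beta> k) + (\<Sum>k\<le>n. T k * ((-1)^k * (-\<beta>/Gm) * W k))
       + (-\<beta>/Gm) * (\<Sum>j\<in>{1..L}. cc j * s powr (-\<beta> - real j) * Jy j)"
  proof -
    have r1: "(\<Sum>k=n+1..N. B_coef n \<beta> k * s powr (real n - real k) * V_mom a (D 0) n k t)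
        = (\<Sum>j\<in>{1..L}. B_coef n \<beta> (n+j) * s powr (- real j) * V_mom a (D 0) n (n+j) t)"
    proof -
      have e: "{n+1..N} = {1+n..L+n}" using NL by simp
      have "(\<Sum>k=n+1..N. B_coef n \<beta> k * s powr (real n - real k) * V_mom a (D 0) n k t)
          = (\<Sum>j=1..L. B_coef n \<beta> (j+n) * s powr (real n - real (j+n)) * V_mom a (D 0) n (j+n) t)"
        unfolding e by (rule sum.shift_bounds_cl_nat_ivl)
      also have "\<dots> = (\<Sum>j\<in>{1..L}. B_coef n \<beta> (n+j) * s powr (- real j) * V_mom a (D 0) n (n+j) t)"
        by (intro sum.cong refl) (simp add: add.commute)
      finally show ?thesis .
    qed
    have pA: "s powr (-\<beta>) * (\<Sum>k=0..n. A_coef n N \<beta> k * s^k * D k t) = (\<Sum>k\<le>n. T k * A_coef n N \<beta> k)"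
      unfolding sum_distrib_left atMost_atLeast0 T_def
      by (intro sum.cong refl) (simp add: spow2[OF s, symmetric] algebra_simps)
    have pBj: "s powr (-\<beta>) * (B_coef n \<beta> (n+j) * s powr (- real j) * V_mom a (D 0) n (n+j) t)
        = (\<Sum>k\<le>n. T k * ((-1)^k * (-\<beta>/Gm) * (pochhammer (1+\<beta>) (j-1) / fact (j+k))))
          + (-\<beta>/Gm) * (cc j * s powr (-\<beta> - real j) * Jy j)" if j: "j \<in> {1..L}" for j
    proof -
      have Bj: "B_coef n \<beta> (n+j) * real j = -\<beta>/Gm * cc j"
        unfolding cc_def Gm_def using B_conv[OF \<beta>, of j n] j by simp
      have pw: "s powr (-\<beta>) * s powr (- real j) = s powr (-\<beta> - real j)"
        by (simp add: powr_add[symmetric])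
      have tk: "cc j * s powr (-\<beta> - real j) * (D k t / fact k * ((-1)^k * (s^(j+k)*fact(j-1)*fact k/fact(j+k))))
          = T k * ((-1)^k * (pochhammer (1+\<beta>) (j-1) / fact (j+k)))" for k
      proof -
        have "cc j * fact (j-1) = pochhammer (1+\<beta>) (j-1)" unfolding cc_def by simp
        moreover have "s powr (-\<beta> - real j) * s^(j+k) = s powr (real k - \<beta>)" by (rule spow[OF s])
        moreover have "(fact k :: real) \<noteq> 0" by simp
        ultimately show ?thesis unfolding T_def
          by (simp add: field_simps)
      qed
      have "s powr (-\<beta>) * (B_coef n \<beta> (n+j) * s powr (- real j) * V_mom a (D 0) n (n+j) t)
          = (B_coef n \<beta> (n+j) * real j) * (s powr (-\<beta>) * s powr (- real j)) *
            ((\<Sum>k\<le>n. D k t / fact k * ((-1)^k * (s^(j+k)*fact(j-1)*fact k/fact(j+k)))) + Jy j)"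
        unfolding V[OF j] by (simp add: algebra_simps)
      also have "\<dots> = (-\<beta>/Gm) * ((\<Sum>k\<le>n. cc j * s powr (-\<beta> - real j) * (D k t / fact k * ((-1)^k * (s^(j+k)*fact(j-1)*fact k/fact(j+k)))))
            + cc j * s powr (-\<beta> - real j) * Jy j)"
        unfolding Bj pw by (simp add: sum_distrib_left algebra_simps)
      also have "\<dots> = (-\<beta>/Gm) * ((\<Sum>k\<le>n. T k * ((-1)^k * (pochhammer (1+\<beta>) (j-1) / fact (j+k))))
            + cc j * s powr (-\<beta> - real j) * Jy j)"
        unfolding tk ..
      finally show ?thesis by (simp add: sum_distrib_left algebra_simps)
    qed
    have pB: "s powr (-\<beta>) * (\<Sum>j\<in>{1..L}. B_coef n \<beta> (n+j) * s powr (- real j) * V_mom a (D 0) n (n+j) t)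
        = (\<Sum>k\<le>n. T k * ((-1)^k * (-\<beta>/Gm) * W k)) + (-\<beta>/Gm) * (\<Sum>j\<in>{1..L}. cc j * s powr (-\<beta> - real j) * Jy j)"
    proof -
      have "s powr (-\<beta>) * (\<Sum>j\<in>{1..L}. B_coef n \<beta> (n+j) * s powr (- real j) * V_mom a (D 0) n (n+j) t)
          = (\<Sum>j\<in>{1..L}. (\<Sum>k\<le>n. T k * ((-1)^k * (-\<beta>/Gm) * (pochhammer (1+\<beta>) (j-1) / fact (j+k))))
          + (-\<beta>/Gm) * (cc j * s powr (-\<beta> - real j) * Jy j))"
        unfolding sum_distrib_left by (intro sum.cong refl pBj)
      also have "\<dots> = (\<Sum>k\<le>n. \<Sum>j\<in>{1..L}. T k * ((-1)^k * (-\<beta>/Gm) * (pochhammer (1+\<beta>) (j-1) / fact (j+k))))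
          + (-\<beta>/Gm) * (\<Sum>j\<in>{1..L}. cc j * s powr (-\<beta> - real j) * Jy j)"
        by (simp only: sum.distrib sum.swap[of _ "{1..L}" "{..n}"] sum_distrib_left)
      also have "\<dots> = (\<Sum>k\<le>n. T k * ((-1)^k * (-\<beta>/Gm) * W k)) + (-\<beta>/Gm) * (\<Sum>j\<in>{1..L}. cc j * s powr (-\<beta> - real j) * Jy j)"
        unfolding W_def by (simp add: sum_distrib_left)
      finally show ?thesis .
    qed
    show ?thesis
      unfolding S1_def \<beta>_def[symmetric] s_def[symmetric] r1 distrib_left pA pB by simp
  qed
  define Q where "Q = (\<lambda>k::nat. (-1)^(k+1)*\<beta>/(Gm*fact k*(real k-\<beta>)))"
  have MA2: "marchaud_left a alpha x t = (\<Sum>k\<le>n. T k * Q k) - \<beta>/Gm*Ig"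
  proof -
    have q0: "T 0 * Q 0 = x t / (Gm * s powr \<beta>)"
      unfolding T_def Q_def D0 using \<beta> Gm powr_minus[of s \<beta>] by (simp add: field_simps)
    have qk: "\<beta>/Gm * (c1 k * (s powr (real k - \<beta>)/(real k - \<beta>))) = T k * Q k" if "k \<in> {1..n}" for k
    proof -
      have "real k - \<beta> \<noteq> 0" using that \<beta> by auto
      moreover have "(fact k::real) \<noteq> 0" by simp
      ultimately show ?thesis unfolding T_def Q_def c1_def using Gm by (simp add: field_simps)
    qed
    have "(\<Sum>k\<le>n. T k * Q k) = T 0 * Q 0 + (\<Sum>k\<in>{1..n}. T k * Q k)" by (rule sum_split0)
    also have "\<dots> = x t / (Gm * s powr \<beta>) + \<beta>/Gm * (\<Sum>k\<in>{1..n}. c1 k * (s powr (real k - \<beta>)/(real k - \<beta>)))"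
      unfolding q0 sum_distrib_left using qk by simp
    finally show ?thesis unfolding MA by (simp add: algebra_simps)
  qed
  have brk: "Q k = A_coef n N \<beta> k + (-1)^k * (-\<beta>/Gm) * W k" for k
  proof -
    have C: "(-1)^(k+1)*\<beta>/(fact k*(real k-\<beta>)) =
       pochhammer (\<beta>-real k+1) (L+k)/(pochhammer (1-\<beta>) k * fact (L+k)) - (-1)^k*\<beta>*W k"
      unfolding W_def by (rule Ck_identity[OF \<beta>])
    have A: "A_coef n N \<beta> k = pochhammer (\<beta>-real k+1) (L+k)/(Gm*pochhammer (1-\<beta>) k*fact (L+k))"
      unfolding NL(1) Gm_def by (rule A_conv[OF \<beta>])
    have "Q k = ((-1)^(k+1)*\<beta>/(fact k*(real k-\<beta>))) / Gm" unfolding Q_def by simp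
    also have "\<dots> = pochhammer (\<beta>-real k+1) (L+k)/(pochhammer (1-\<beta>) k * fact (L+k)) / Gm - (-1)^k*\<beta>*W k / Gm"
      unfolding C by (rule diff_divide_distrib)
    also have "\<dots> = A_coef n N \<beta> k + (-1)^k * (-\<beta>/Gm) * W k"
      unfolding A by (simp add: mult.commute mult.left_commute)
    finally show ?thesis .
  qed
  define IK where "IK = Ig - (\<Sum>j\<in>{1..L}. cc j * s powr (-\<beta> - real j) * Jy j)"
  have Eeq: "marchaud_left a alpha x t - S1 a alpha D n N t = -\<beta>/Gm * IK"
  proof -
    have "(\<Sum>k\<le>n. T k * Q k) = (\<Sum>k\<le>n. T k * A_coef n N \<beta> k) + (\<Sum>k\<le>n. T k * ((-1)^k * (-\<beta>/Gm) * W k))"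
      unfolding brk by (simp only: distrib_left sum.distrib)
    then show ?thesis unfolding MA2 S1e IK_def by (simp add: algebra_simps)
  qed
  define Kf where "Kf = (\<lambda>\<tau>. (t-\<tau>) powr (-1-\<beta>) - (\<Sum>j\<in>{1..L}. cc j * s powr (-\<beta> - real j) * (\<tau>-a)^(j-1)))"
  have K1: "((\<lambda>\<tau>. y \<tau> * Kf \<tau>) has_integral IK) {a..t}"
  proof -
    have H: "((\<lambda>\<tau>. g \<tau> - (\<Sum>j\<in>{1..L}. (cc j * s powr (-\<beta> - real j)) * ((\<tau>-a)^(j-1) * y \<tau>))) has_integral
        Ig - (\<Sum>j\<in>{1..L}. (cc j * s powr (-\<beta> - real j)) * Jy j)) {a..t}"
      unfolding Ig_def Jy_def
      by (intro has_integral_diff has_integral_sum has_integral_mult_right integrable_integral gint yint) auto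
    show ?thesis
    proof (rule has_integral_eq[OF _ H[folded IK_def]])
      fix \<tau> assume "\<tau> \<in> {a..t}"
      show "g \<tau> - (\<Sum>j\<in>{1..L}. (cc j * s powr (-\<beta> - real j)) * ((\<tau>-a)^(j-1) * y \<tau>)) = y \<tau> * Kf \<tau>"
        unfolding Kf_def g_def right_diff_distrib sum_distrib_left by (simp add: algebra_simps)
    qed
  qed
  have K2: "Kf \<tau> \<ge> 0" if "\<tau> \<in> {a..<t}" for \<tau>
  proof -
    define u where "u = (\<tau>-a)/s"
    have u: "0 \<le> u" "u < 1" unfolding u_def using that s by (auto simp: s_def field_simps)
    have tu: "t - \<tau> = s * (1-u)" unfolding u_def using s by (simp add: s_def field_simps)
    have p1: "(t-\<tau>) powr (-1-\<beta>) = s powr (-1-\<beta>) * (1-u) powr (-1-\<beta>)"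
      unfolding tu using s u by (simp add: powr_mult)
    have p2: "cc j * s powr (-\<beta> - real j) * (\<tau>-a)^(j-1) = s powr (-1-\<beta>) * (pochhammer (1+\<beta>) (j-1)/fact (j-1) * u^(j-1))"
      if j: "j \<in> {1..L}" for j
    proof -
      have "\<tau> - a = u * s" unfolding u_def using s by simp
      then have "(\<tau>-a)^(j-1) = u^(j-1) * s powr real (j-1)" using powr_realpow[OF s, of "j-1"] by (simp add: power_mult_distrib)
      moreover have "s powr (-\<beta> - real j) * s powr real (j-1) = s powr (-1-\<beta>)"
        using j by (simp add: powr_add[symmetric] of_nat_diff algebra_simps)
      ultimately show ?thesis unfolding cc_def by (simp add: algebra_simps)
    qed
    have "(\<Sum>j\<in>{1..L}. cc j * s powr (-\<beta> - real j) * (\<tau>-a)^(j-1)) = s powr (-1-\<beta>) * (\<Sum>j\<in>{1..L}. pochhammer (1+\<beta>) (j-1)/fact (j-1) * u^(j-1))"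
      unfolding sum_distrib_left by (intro sum.cong refl p2)
    also have "(\<Sum>j\<in>{1..L}. pochhammer (1+\<beta>) (j-1)/fact (j-1) * u^(j-1)) = (\<Sum>i<L. pochhammer (1+\<beta>) i/fact i * u^i)"
      using sum.atLeast1_atMost_eq[of "\<lambda>j. pochhammer (1+\<beta>) (j-1)/fact (j-1) * u^(j-1)" L] by simp
    finally have "Kf \<tau> = s powr (-1-\<beta>) * ((1-u) powr (-1-\<beta>) - (\<Sum>i<L. pochhammer (1+\<beta>) i/fact i * u^i))"
      unfolding Kf_def p1 by (simp add: algebra_simps)
    moreover have "(\<Sum>i<L. pochhammer (1+\<beta>) i/fact i * u^i) \<le> (1-u) powr (-1-\<beta>)"
      by (rule binom_rem[OF \<beta>(1) u])
    ultimately show ?thesis by simp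
  qed
  have K3: "norm (y \<tau> * Kf \<tau>) \<le> M / fact n * ((t-\<tau>)^(Suc n) * Kf \<tau>)" if "\<tau> \<in> {a..t}" for \<tau>
  proof (cases "\<tau> = t")
    case True then show ?thesis by (simp add: yt)
  next
    case False
    with that have "\<tau> \<in> {a..<t}" by auto
    then have Kp: "Kf \<tau> \<ge> 0" by (rule K2)
    have "norm (y \<tau> * Kf \<tau>) = \<bar>y \<tau>\<bar> * Kf \<tau>" using Kp by (simp add: abs_mult)
    also have "\<dots> \<le> (M * (t - \<tau>)^(Suc n) / fact n) * Kf \<tau>"
      by (rule mult_right_mono[OF tay[OF that] Kp])
    finally show ?thesis by simp
  qed
  define JK where "JK = s powr (real n+1-\<beta>) * (fact (n+1) * pochhammer (1+\<beta>) L / ((real n+1-\<beta>) * fact (L+n+1)))"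
  have pwg: "(t-\<tau>)^(Suc n) * (t-\<tau>) powr (-1-\<beta>) = (t - \<tau>) powr (real n - \<beta>)" if "\<tau> \<in> {a..t}" for \<tau>
  proof (cases "\<tau> = t")
    case True then show ?thesis by simp
  next
    case False
    with that have d: "t - \<tau> > 0" by auto
    have e: "(t-\<tau>)^(Suc n) = (t-\<tau>) powr (real n + 1)" using powr_realpow[OF d, of "Suc n"] by (simp add: add.commute)
    have "(t-\<tau>) powr (real n + 1) * (t-\<tau>) powr (-1-\<beta>) = (t-\<tau>) powr (real n + 1 + (-1-\<beta>))"
      by (simp only: powr_add)
    then show ?thesis unfolding e by simp
  qed
  have K4: "((\<lambda>\<tau>. (t-\<tau>)^(Suc n) * Kf \<tau>) has_integral JK) {a..t}"
  proof -
    have h1: "((\<lambda>\<tau>. (t-\<tau>) powr (real n - \<beta>)) has_integral s powr (real n - \<beta> + 1)/(real n - \<beta> + 1)) {a..t}"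
      unfolding s_def using powr_integral[of a t "real n - \<beta>"] t \<beta> by auto
    have h2: "((\<lambda>\<tau>. (cc j * s powr (-\<beta> - real j)) * ((\<tau>-a)^(j-1)*(t-\<tau>)^(Suc n))) has_integral
        (cc j * s powr (-\<beta> - real j)) * (s^(j+n+1)*fact(j-1)*fact (Suc n)/fact(j+n+1))) {a..t}"
      if j: "j \<in> {1..L}" for j
    proof -
      have "j - 1 + Suc n + 1 = j + n + 1" using j by auto
      then have "((\<lambda>\<tau>. (\<tau>-a)^(j-1)*(t-\<tau>)^(Suc n)) has_integral s^(j+n+1)*fact(j-1)*fact (Suc n)/fact(j+n+1)) {a..t}"
        using beta_poly[of a t "j-1" "Suc n"] t unfolding s_def by simp
      then show ?thesis by (rule has_integral_mult_right)
    qed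
    have H: "((\<lambda>\<tau>. (t-\<tau>) powr (real n - \<beta>) - (\<Sum>j\<in>{1..L}. (cc j * s powr (-\<beta> - real j)) * ((\<tau>-a)^(j-1)*(t-\<tau>)^(Suc n)))) has_integral
        s powr (real n - \<beta> + 1)/(real n - \<beta> + 1) - (\<Sum>j\<in>{1..L}. (cc j * s powr (-\<beta> - real j)) * (s^(j+n+1)*fact(j-1)*fact (Suc n)/fact(j+n+1)))) {a..t}"
      by (rule has_integral_diff[OF h1 has_integral_sum]) (use h2 in auto)
    have val: "s powr (real n - \<beta> + 1)/(real n - \<beta> + 1) - (\<Sum>j\<in>{1..L}. (cc j * s powr (-\<beta> - real j)) * (s^(j+n+1)*fact(j-1)*fact (Suc n)/fact(j+n+1))) = JK"
    proof -
      have tj: "(cc j * s powr (-\<beta> - real j)) * (s^(j+n+1)*fact(j-1)*fact (Suc n)/fact(j+n+1))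
          = s powr (real n+1-\<beta>) * (fact (n+1) * (pochhammer (1+\<beta>) (j-1) / fact (j-1+n+2)))" if j: "j \<in> {1..L}" for j
      proof -
        define F3 where "F3 = (fact (j+n+1) :: real)"
        have a1: "cc j * fact (j-1) = pochhammer (1+\<beta>) (j-1)" unfolding cc_def by simp
        have a2: "s powr (-\<beta> - real j) * s^(j+(n+1)) = s powr (real (n+1) - \<beta>)" by (rule spow[OF s])
        have a3: "(fact (j-1+n+2)::real) = F3" unfolding F3_def using j by (simp add: Suc_diff_1 numeral_2_eq_2)
        have a4: "s^(j+n+1) = s^(j+(n+1))" by (simp add: add.assoc)
        have a5: "real (n+1) - \<beta> = real n + 1 - \<beta>" by simp
        have a6: "(fact (Suc n)::real) = fact (n+1)" by simp
        have "(cc j * s powr (-\<beta> - real j)) * (s^(j+n+1)*fact(j-1)*fact (Suc n)/F3)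
            = (cc j * fact (j-1)) * (s powr (-\<beta> - real j) * s^(j+(n+1))) * (fact (Suc n) / F3)"
          unfolding a4 by (simp add: ac_simps)
        also have "\<dots> = s powr (real n+1-\<beta>) * (fact (n+1) * (pochhammer (1+\<beta>) (j-1) / F3))"
          unfolding a1 a2 a5 a6 by (simp add: ac_simps)
        finally show ?thesis unfolding F3_def[symmetric] a3 .
      qed

      have "(\<Sum>j\<in>{1..L}. (cc j * s powr (-\<beta> - real j)) * (s^(j+n+1)*fact(j-1)*fact (Suc n)/fact(j+n+1)))
          = s powr (real n+1-\<beta>) * (fact (n+1) * (\<Sum>j\<in>{1..L}. pochhammer (1+\<beta>) (j-1) / fact (j-1+n+2)))"
        unfolding sum_distrib_left by (intro sum.cong refl tj)
      also have "(\<Sum>j\<in>{1..L}. pochhammer (1+\<beta>) (j-1) / fact (j-1+n+2)) = (\<Sum>i<L. pochhammer (1+\<beta>) i / fact (i+n+2))"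
        using sum.atLeast1_atMost_eq[of "\<lambda>j. pochhammer (1+\<beta>) (j-1) / fact (j-1+n+2)" L] by simp
      finally have S: "(\<Sum>j\<in>{1..L}. (cc j * s powr (-\<beta> - real j)) * (s^(j+n+1)*fact(j-1)*fact (Suc n)/fact(j+n+1)))
          = s powr (real n+1-\<beta>) * (fact (n+1) * (\<Sum>i<L. pochhammer (1+\<beta>) i / fact (i+n+2)))" .
      have "s powr (real n - \<beta> + 1)/(real n - \<beta> + 1) = s powr (real n+1-\<beta>) * (1/(real n+1-\<beta>))"
        by (simp add: algebra_simps)
      then have "s powr (real n - \<beta> + 1)/(real n - \<beta> + 1) - (\<Sum>j\<in>{1..L}. (cc j * s powr (-\<beta> - real j)) * (s^(j+n+1)*fact(j-1)*fact (Suc n)/fact(j+n+1)))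
          = s powr (real n+1-\<beta>) * (1/(real n+1-\<beta>) - fact (n+1) * (\<Sum>i<L. pochhammer (1+\<beta>) i / fact (i+n+2)))"
        unfolding S by (simp add: right_diff_distrib)
      also have "\<dots> = JK" unfolding JK_def tele[OF \<beta>] ..
      finally show ?thesis .
    qed
    show ?thesis
    proof (rule has_integral_eq[OF _ H[unfolded val]])
      fix \<tau> assume \<tau>: "\<tau> \<in> {a..t}"
      have "(t-\<tau>)^(Suc n) * Kf \<tau> = (t-\<tau>)^(Suc n) * (t-\<tau>) powr (-1-\<beta>) - (\<Sum>j\<in>{1..L}. (cc j * s powr (-\<beta> - real j)) * ((\<tau>-a)^(j-1)*(t-\<tau>)^(Suc n)))"
        unfolding Kf_def right_diff_distrib sum_distrib_left by (simp add: algebra_simps)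
      then show "(t-\<tau>) powr (real n - \<beta>) - (\<Sum>j\<in>{1..L}. (cc j * s powr (-\<beta> - real j)) * ((\<tau>-a)^(j-1)*(t-\<tau>)^(Suc n))) = (t-\<tau>)^(Suc n) * Kf \<tau>"
        using pwg[OF \<tau>] by simp
    qed
  qed
  have IKb: "\<bar>IK\<bar> \<le> M / fact n * JK"
  proof -
    have "norm (integral {a..t} (\<lambda>\<tau>. y \<tau> * Kf \<tau>)) \<le> integral {a..t} (\<lambda>\<tau>. M / fact n * ((t-\<tau>)^(Suc n) * Kf \<tau>))"
      by (rule integral_norm_bound_integral[OF has_integral_integrable[OF K1] has_integral_integrable[OF has_integral_mult_right[OF K4]] K3])
    moreover have "integral {a..t} (\<lambda>\<tau>. M / fact n * ((t-\<tau>)^(Suc n) * Kf \<tau>)) = M / fact n * JK"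
      by (rule integral_unique[OF has_integral_mult_right[OF K4]])
    moreover have "integral {a..t} (\<lambda>\<tau>. y \<tau> * Kf \<tau>) = IK" by (rule integral_unique[OF K1])
    ultimately show ?thesis by (simp only: real_norm_def)
  qed
  have Gn: "Gamma (real n + 1 - \<beta>) = Gm * pochhammer (1-\<beta>) n"
  proof -
    have "pochhammer (1-\<beta>) n = Gamma (1-\<beta> + real n) / Gamma (1-\<beta>)"
      by (rule pochhammer_Gamma[OF nonint_minus_nat(3)[OF \<beta>]])
    moreover have "1-\<beta> + real n = real n + 1 - \<beta>" by simp
    moreover have "Gamma (1-\<beta>) \<noteq> 0" using Gm unfolding Gm_def by simp
    ultimately show ?thesis unfolding Gm_def by simp
  qed
  define X where "X = (real n - \<beta>)\<^sup>2 + real n - \<beta>"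
  have FI: "\<beta>*(real n+1)*pochhammer (1+\<beta>) L/((real n+1-\<beta>)*fact(n+L+1))
     \<le> exp X/(pochhammer (1-\<beta>) n*(real n-\<beta>)*real(n+L) powr (real n-\<beta>))"
    unfolding X_def using final_ineq[OF \<beta> n_pos NL(2)] by (simp add: power2_eq_square)
  define Z where "Z = M * s powr (real n + 1 - \<beta>) / Gm"
  have Z: "Z \<ge> 0" unfolding Z_def using M0 Gm by simp
  have l: "\<beta>/Gm*(M/fact n*JK) = Z * (\<beta>*(real n+1)*pochhammer (1+\<beta>) L/((real n+1-\<beta>)*fact(n+L+1)))"
  proof -
    have f1: "(fact (n+1)::real) = (real n+1) * fact n" by simp
    have f2: "(fact (L+n+1)::real) = fact (n+L+1)" by (simp add: add.commute)
    define F where "F = (fact (n+L+1)::real)"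
    define Fn where "Fn = (fact n::real)"
    define R where "R = real n + 1 - \<beta>"
    define SP where "SP = s powr (real n + 1 - \<beta>)"
    define PP where "PP = pochhammer (1+\<beta>) L"
    have nz: "Fn \<noteq> 0" "R \<noteq> 0" "F \<noteq> 0" "Gm \<noteq> 0"
      unfolding Fn_def R_def F_def using \<beta> Gm by auto
    have "\<beta>/Gm*(M/Fn*(SP*((real n+1)*Fn*PP/(R*F)))) = (M*SP/Gm)*(\<beta>*(real n+1)*PP/(R*F))"
      using nz by (simp add: field_simps)
    then show ?thesis unfolding JK_def Z_def f1 f2 F_def[symmetric] Fn_def[symmetric] R_def[symmetric] SP_def[symmetric] PP_def[symmetric]
      using nz by (simp add: mult.assoc)
  qed
  have r: "M * (exp X / (Gamma (real n + 1 - \<beta>) * (real n - \<beta>) * real N powr (real n - \<beta>))) * s powr (real n + 1 - \<beta>)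
     = Z * (exp X/(pochhammer (1-\<beta>) n*(real n-\<beta>)*real(n+L) powr (real n-\<beta>)))"
  proof -
    define Q where "Q = real (n+L) powr (real n - \<beta>)"
    define PP where "PP = pochhammer (1-\<beta>) n"
    define SP where "SP = s powr (real n + 1 - \<beta>)"
    define R where "R = real n - \<beta>"
    have nz: "Q \<noteq> 0" "PP \<noteq> 0" "R \<noteq> 0" "Gm \<noteq> 0"
      unfolding Q_def PP_def R_def using \<beta> Gm n_pos NL pochhammer_pos[of "1-\<beta>" n] by auto
    have "M * (exp X / (Gm * PP * R * Q)) * SP = (M * SP / Gm) * (exp X/(PP*R*Q))"
      using nz by (simp add: field_simps)
    then show ?thesis unfolding Gn Z_def NL(1) unfolding Q_def[symmetric] unfolding PP_def[symmetric] SP_def[symmetric] R_def[symmetric] .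
  qed
  have "\<bar>marchaud_left a alpha x t - S1 a alpha D n N t\<bar> = \<beta>/Gm * \<bar>IK\<bar>"
    unfolding Eeq using \<beta> Gm by (simp add: abs_mult)
  also have "\<dots> \<le> \<beta>/Gm * (M / fact n * JK)"
    using IKb \<beta> Gm by (intro mult_left_mono) auto
  also have "\<dots> \<le> Z * (exp X/(pochhammer (1-\<beta>) n*(real n-\<beta>)*real(n+L) powr (real n-\<beta>)))"
    unfolding l by (rule mult_left_mono[OF FI Z])
  also have "\<dots> = M * (exp X / (Gamma (real n + 1 - \<beta>) * (real n - \<beta>) * real N powr (real n - \<beta>))) * s powr (real n + 1 - \<beta>)"
    by (rule r[symmetric])
  finally show ?thesis unfolding M_def X_def \<beta>_def s_def .
qed


end
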